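(* Let $n\in\omega$ and for each $u\in2^n$ let $X_u\subseteq\mathcal D$ be a nonempty $\mathrm{OD}$ set. Assume that for every neighbouring pair $u,v\in2^n$ an $\mathrm{OD}$ set $R_{uv}\subseteq\mathcal D^2$ is given such that $X_u\,R_{uv}\,X_v$. (1) If $u_0\in2^n$ and $X'\subseteq X_{u_0}$ is a nonempty $\mathrm{OD}$ set, then there is a system of nonempty $\mathrm{OD}$ sets $Y_u\subseteq X_u$ ($u\in2^n$) such that $Y_u\,R_{uv}\,Y_v$ for all neighbouring pairs $u,v$, and $Y_{u_0}=X'$. (2) If $u_0,v_0\in2^n$ is a neighbouring pair and nonempty $\mathrm{OD}$ sets $X'\subseteq X_{u_0}$, $X''\subseteq X_{v_0}$ satisfy $X'\,R_{u_0v_0}\,X''$, then there is a system of nonempty $\mathrm{OD}$ sets $Y_u\subseteq X_u$ ($u\in2^n$) such that $Y_u\,R_{uv}\,Y_v$ for all neighbouring pairs $u,v$, and $Y_{u_0}=X'$, $Y_{v_0}=X''$.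
   Context: $\mathcal D=2^\omega$. For $u,v\in2^n$, the ordered pair $\langle u,v\rangle$ is a neighbouring pair iff $u=0^k{}^\frown0^\frown r$ and $v=0^k{}^\frown1^\frown r$ for some $k<n$ and some $r\in2^{n-k-1}$, where $0^k$ is the sequence of $k$ zeros. For sets $X,Y$ and a binary relation $R$, $X\,R\,Y$ means: $\forall x\in X\,\exists y\in Y\,(x\,R\,y)$ and $\forall y\in Y\,\exists x\in X\,(x\,R\,y)$. *)

theory Defs
  imports Main
begin

text \<open>The Baire/Cantor space D = 2^omega is modelled as nat => bool; finite binary
  sequences u in 2^n are bool lists of length n (False = 0, True = 1).\<close>

type_synonym cantor = "nat \<Rightarrow> bool"

definition neighbouring :: "nat \<Rightarrow> bool list \<Rightarrow> bool list \<Rightarrow> bool" where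
  "neighbouring n u v \<longleftrightarrow>
     (\<exists>k r. k < n \<and> length r = n - k - 1 \<and>
        u = replicate k False @ [False] @ r \<and> v = replicate k False @ [True] @ r)"

definition rel_between :: "'a set \<Rightarrow> ('a \<times> 'b) set \<Rightarrow> 'b set \<Rightarrow> bool" where
  "rel_between X R Y \<longleftrightarrow>
     (\<forall>x\<in>X. \<exists>y\<in>Y. (x, y) \<in> R) \<and> (\<forall>y\<in>Y. \<exists>x\<in>X. (x, y) \<in> R)"

end

theory Submission imports Defs begin

lemma nb_len: "neighbouring n u v \<Longrightarrow> length u = n \<and> length v = n"
  by (auto simp: neighbouring_def)

lemma nb_Suc: "neighbouring (Suc n) u v \<longleftrightarrow>
   (\<exists>u' v' b. u = u'@[b] \<and> v = v'@[b] \<and> neighbouring n u' v') \<or>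
   (u = replicate n False @ [False] \<and> v = replicate n False @ [True])"
proof
  assume "neighbouring (Suc n) u v"
  then obtain k r where k: "k < Suc n" "length r = n - k" "u = replicate k False @ [False] @ r"
     "v = replicate k False @ [True] @ r" by (auto simp: neighbouring_def)
  show "(\<exists>u' v' b. u = u'@[b] \<and> v = v'@[b] \<and> neighbouring n u' v') \<or>
   (u = replicate n False @ [False] \<and> v = replicate n False @ [True])"
  proof (cases "k = n")
    case True then show ?thesis using k by simp
  next
    case False
    then have "r \<noteq> []" using k by auto
    then have r: "r = butlast r @ [last r]" by simp
    have "neighbouring n (replicate k False @ [False] @ butlast r) (replicate k False @ [True] @ butlast r)"
      unfolding neighbouring_def using k False by (intro exI[of _ k] exI[of _ "butlast r"]) auto
    moreover have "u = (replicate k False @ [False] @ butlast r) @ [last r]"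
        "v = (replicate k False @ [True] @ butlast r) @ [last r]" using k r by (metis append_assoc)+
    ultimately show ?thesis by blast
  qed
next
  assume "(\<exists>u' v' b. u = u'@[b] \<and> v = v'@[b] \<and> neighbouring n u' v') \<or>
   (u = replicate n False @ [False] \<and> v = replicate n False @ [True])"
  then show "neighbouring (Suc n) u v"
  proof
    assume "\<exists>u' v' b. u = u'@[b] \<and> v = v'@[b] \<and> neighbouring n u' v'"
    then obtain u' v' b k r where "u = u'@[b]" "v = v'@[b]" "k < n" "length r = n - k - 1"
      "u' = replicate k False @ [False] @ r" "v' = replicate k False @ [True] @ r"
      by (auto simp: neighbouring_def)
    then show ?thesis unfolding neighbouring_def
      by (intro exI[of _ k] exI[of _ "r@[b]"]) auto
  next
    assume "u = replicate n False @ [False] \<and> v = replicate n False @ [True]"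
    then show ?thesis unfolding neighbouring_def
      by (intro exI[of _ n] exI[of _ "[]"]) auto
  qed
qed

definition good :: "('a set \<Rightarrow> bool) \<Rightarrow> nat \<Rightarrow> (bool list \<Rightarrow> 'a set) \<Rightarrow> (bool list \<Rightarrow> bool list \<Rightarrow> ('a \<times> 'a) set) \<Rightarrow> (bool list \<Rightarrow> 'a set) \<Rightarrow> bool" where
  "good ODs n X R Y \<longleftrightarrow> (\<forall>u. length u = n \<longrightarrow> Y u \<noteq> {} \<and> ODs (Y u) \<and> Y u \<subseteq> X u) \<and>
                 (\<forall>u v. neighbouring n u v \<longrightarrow> rel_between (Y u) (R u v) (Y v))"

definition hyp :: "('a set \<Rightarrow> bool) \<Rightarrow> (('a \<times> 'a) set \<Rightarrow> bool) \<Rightarrow> nat \<Rightarrow> (bool list \<Rightarrow> 'a set) \<Rightarrow> (bool list \<Rightarrow> bool list \<Rightarrow> ('a \<times> 'a) set) \<Rightarrow> bool" where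
  "hyp ODs ODr n X R \<longleftrightarrow> (\<forall>u. length u = n \<longrightarrow> X u \<noteq> {} \<and> ODs (X u)) \<and>
      (\<forall>u v. neighbouring n u v \<longrightarrow> ODr (R u v) \<and> rel_between (X u) (R u v) (X v))"

lemma all_Suc_len: fixes P :: "'a list \<Rightarrow> bool" shows "(\<forall>u. length u = Suc n \<longrightarrow> P u) \<longleftrightarrow> (\<forall>b u. length u = n \<longrightarrow> P (u@[b]))"
proof safe
  fix u :: "'a list" assume H: "\<forall>b u. length u = n \<longrightarrow> P (u@[b])" and l: "length u = Suc n"
  then have "u \<noteq> []" by auto
  then have "u = butlast u @ [last u]" by simp
  then show "P u" using H l by (metis diff_Suc_1 length_butlast)
qed auto

lemma good_Suc: "good ODs (Suc n) X R Y \<longleftrightarrow>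
  (\<forall>b. good ODs n (\<lambda>u. X (u@[b])) (\<lambda>u v. R (u@[b]) (v@[b])) (\<lambda>u. Y (u@[b]))) \<and>
  rel_between (Y (replicate n False @ [False])) (R (replicate n False @ [False]) (replicate n False @ [True])) (Y (replicate n False @ [True]))"
  unfolding good_def all_Suc_len nb_Suc by auto

lemma hyp_Suc: "hyp ODs ODr (Suc n) X R \<Longrightarrow>
  (\<forall>b. hyp ODs ODr n (\<lambda>u. X (u@[b])) (\<lambda>u v. R (u@[b]) (v@[b]))) \<and>
  ODr (R (replicate n False @ [False]) (replicate n False @ [True])) \<and>
  rel_between (X (replicate n False @ [False])) (R (replicate n False @ [False]) (replicate n False @ [True])) (X (replicate n False @ [True]))"
  unfolding hyp_def all_Suc_len nb_Suc by auto

lemma rb_fwd: "rel_between X R Y \<Longrightarrow> A \<subseteq> X \<Longrightarrow> rel_between A R (R``A \<inter> Y) \<and> (A \<noteq> {} \<longrightarrow> R``A \<inter> Y \<noteq> {})"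
  unfolding rel_between_def by blast

lemma rb_bwd: "rel_between X R Y \<Longrightarrow> B \<subseteq> Y \<Longrightarrow> rel_between (R\<inverse>``B \<inter> X) R B \<and> (B \<noteq> {} \<longrightarrow> R\<inverse>``B \<inter> X \<noteq> {})"
  unfolding rel_between_def by blast

lemma good_comb: "good ODs n X0 R0 Y0 \<Longrightarrow> good ODs n X1 R1 Y1 \<Longrightarrow>
   X0 = (\<lambda>u. X (u@[False])) \<Longrightarrow> X1 = (\<lambda>u. X (u@[True])) \<Longrightarrow>
   R0 = (\<lambda>u v. R (u@[False]) (v@[False])) \<Longrightarrow> R1 = (\<lambda>u v. R (u@[True]) (v@[True])) \<Longrightarrow>
   rel_between (Y0 (replicate n False)) (R (replicate n False @ [False]) (replicate n False @ [True])) (Y1 (replicate n False)) \<Longrightarrow>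
   good ODs (Suc n) X R (\<lambda>u. if last u then Y1 (butlast u) else Y0 (butlast u))"
  unfolding good_Suc apply (intro conjI allI)
  subgoal for b by (cases b) (auto cong: if_cong)
  by simp

locale odl =
  fixes ODs :: "'a set \<Rightarrow> bool" and ODr :: "('a \<times> 'a) set \<Rightarrow> bool"
  assumes OD_Int: "\<And>A B. ODs A \<Longrightarrow> ODs B \<Longrightarrow> ODs (A \<inter> B)"
    and OD_Image: "\<And>S A. ODr S \<Longrightarrow> ODs A \<Longrightarrow> ODs (S `` A)"
    and OD_Image_conv: "\<And>S A. ODr S \<Longrightarrow> ODs A \<Longrightarrow> ODs (S\<inverse> `` A)"
begin

lemma part1: "hyp ODs ODr n X R \<Longrightarrow> length u0 = n \<Longrightarrow> X' \<subseteq> X u0 \<Longrightarrow> X' \<noteq> {} \<Longrightarrow> ODs X' \<Longrightarrow>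
  \<exists>Y. good ODs n X R Y \<and> Y u0 = X'"
proof (induction n arbitrary: X R u0 X')
  case 0
  then show ?case unfolding good_def by (intro exI[of _ "\<lambda>u. X'"]) (auto simp: neighbouring_def)
next
  case (Suc n)
  define z where "z = replicate n False"
  define X0 where "X0 = (\<lambda>u. X (u@[False]))"
  define X1 where "X1 = (\<lambda>u. X (u@[True]))"
  define R0 where "R0 = (\<lambda>u v. R (u@[False]) (v@[False]))"
  define R1 where "R1 = (\<lambda>u v. R (u@[True]) (v@[True]))"
  define S where "S = R (z @ [False]) (z @ [True])"
  have H: "hyp ODs ODr n X0 R0" "hyp ODs ODr n X1 R1" "ODr S" "rel_between (X0 z) S (X1 z)"
    using hyp_Suc[OF Suc.prems(1)] unfolding X0_def X1_def R0_def R1_def S_def z_def by auto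
  have Xz: "ODs (X0 z)" "ODs (X1 z)" using H(1,2) unfolding hyp_def z_def by auto
  have lz: "length z = n" by (simp add: z_def)
  have "u0 \<noteq> []" using Suc.prems by auto
  then have u0: "u0 = butlast u0 @ [last u0]" by simp
  have lu: "length (butlast u0) = n" using Suc.prems by simp
  show ?case
  proof (cases "last u0")
    case True
    then have "X' \<subseteq> X1 (butlast u0)" using Suc.prems u0 unfolding X1_def by (metis)
    then obtain Y1 where Y1: "good ODs n X1 R1 Y1" "Y1 (butlast u0) = X'"
      using Suc.IH[OF H(2) lu _ Suc.prems(4,5)] by blast
    have Y1z: "Y1 z \<subseteq> X1 z" "Y1 z \<noteq> {}" "ODs (Y1 z)" using Y1(1) lz unfolding good_def by auto
    define X'' where "X'' = S\<inverse>``Y1 z \<inter> X0 z"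
    have X'': "rel_between X'' S (Y1 z)" "X'' \<noteq> {}" "ODs X''" "X'' \<subseteq> X0 z"
      using rb_bwd[OF H(4) Y1z(1)] Y1z OD_Int OD_Image_conv H(3) Xz unfolding X''_def by auto
    obtain Y0 where Y0: "good ODs n X0 R0 Y0" "Y0 z = X''"
      using Suc.IH[OF H(1) lz X''(4,2,3)] by blast
    have "good ODs (Suc n) X R (\<lambda>u. if last u then Y1 (butlast u) else Y0 (butlast u))"
      by (rule good_comb[OF Y0(1) Y1(1) X0_def X1_def R0_def R1_def]) (use X''(1) Y0(2) in \<open>simp add: S_def z_def\<close>)
    then show ?thesis using True Y1(2) by auto
  next
    case False
    then have "X' \<subseteq> X0 (butlast u0)" using Suc.prems u0 unfolding X0_def by (metis)
    then obtain Y0 where Y0: "good ODs n X0 R0 Y0" "Y0 (butlast u0) = X'"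
      using Suc.IH[OF H(1) lu _ Suc.prems(4,5)] by blast
    have Y0z: "Y0 z \<subseteq> X0 z" "Y0 z \<noteq> {}" "ODs (Y0 z)" using Y0(1) lz unfolding good_def by auto
    define X'' where "X'' = S``Y0 z \<inter> X1 z"
    have X'': "rel_between (Y0 z) S X''" "X'' \<noteq> {}" "ODs X''" "X'' \<subseteq> X1 z"
      using rb_fwd[OF H(4) Y0z(1)] Y0z OD_Int OD_Image H(3) Xz unfolding X''_def by auto
    obtain Y1 where Y1: "good ODs n X1 R1 Y1" "Y1 z = X''"
      using Suc.IH[OF H(2) lz X''(4,2,3)] by blast
    have "good ODs (Suc n) X R (\<lambda>u. if last u then Y1 (butlast u) else Y0 (butlast u))"
      by (rule good_comb[OF Y0(1) Y1(1) X0_def X1_def R0_def R1_def]) (use X''(1) Y1(2) in \<open>simp add: S_def z_def\<close>)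
    then show ?thesis using False Y0(2) by auto
  qed
qed

lemma part2: "hyp ODs ODr n X R \<Longrightarrow> neighbouring n u0 v0 \<Longrightarrow> X' \<subseteq> X u0 \<Longrightarrow> X' \<noteq> {} \<Longrightarrow> ODs X' \<Longrightarrow>
  X'' \<subseteq> X v0 \<Longrightarrow> X'' \<noteq> {} \<Longrightarrow> ODs X'' \<Longrightarrow> rel_between X' (R u0 v0) X'' \<Longrightarrow>
  \<exists>Y. good ODs n X R Y \<and> Y u0 = X' \<and> Y v0 = X''"
proof (induction n arbitrary: X R u0 v0 X' X'')
  case 0
  then show ?case by (auto simp: neighbouring_def)
next
  case (Suc n)
  define z where "z = replicate n False"
  define X0 where "X0 = (\<lambda>u. X (u@[False]))"
  define X1 where "X1 = (\<lambda>u. X (u@[True]))"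
  define R0 where "R0 = (\<lambda>u v. R (u@[False]) (v@[False]))"
  define R1 where "R1 = (\<lambda>u v. R (u@[True]) (v@[True]))"
  define S where "S = R (z @ [False]) (z @ [True])"
  have H: "hyp ODs ODr n X0 R0" "hyp ODs ODr n X1 R1" "ODr S" "rel_between (X0 z) S (X1 z)"
    using hyp_Suc[OF Suc.prems(1)] unfolding X0_def X1_def R0_def R1_def S_def z_def by auto
  have Xz: "ODs (X0 z)" "ODs (X1 z)" using H(1,2) unfolding hyp_def z_def by auto
  have lz: "length z = n" by (simp add: z_def)
  from Suc.prems(2)[unfolded nb_Suc]
  show ?case
  proof (elim disjE exE conjE)
    fix u' v' b assume e: "u0 = u'@[b]" "v0 = v'@[b]" "neighbouring n u' v'"
    have lu: "length u' = n" using e(3) nb_len by blast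
    show ?thesis
    proof (cases b)
      case True
      obtain Y1 where Y1: "good ODs n X1 R1 Y1" "Y1 u' = X'" "Y1 v' = X''"
        using Suc.IH[OF H(2) e(3), of X' X''] Suc.prems e True unfolding X1_def R1_def by auto
      have Y1z: "Y1 z \<subseteq> X1 z" "Y1 z \<noteq> {}" "ODs (Y1 z)" using Y1(1) lz unfolding good_def by auto
      define W where "W = S\<inverse>``Y1 z \<inter> X0 z"
      have W: "rel_between W S (Y1 z)" "W \<noteq> {}" "ODs W" "W \<subseteq> X0 z"
        using rb_bwd[OF H(4) Y1z(1)] Y1z OD_Int OD_Image_conv H(3) Xz unfolding W_def by auto
      obtain Y0 where Y0: "good ODs n X0 R0 Y0" "Y0 z = W"
        using part1[OF H(1) lz W(4,2,3)] by blast
      have "good ODs (Suc n) X R (\<lambda>u. if last u then Y1 (butlast u) else Y0 (butlast u))"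
        by (rule good_comb[OF Y0(1) Y1(1) X0_def X1_def R0_def R1_def]) (use W(1) Y0(2) in \<open>simp add: S_def z_def\<close>)
      then show ?thesis using True Y1(2,3) e by auto
    next
      case False
      obtain Y0 where Y0: "good ODs n X0 R0 Y0" "Y0 u' = X'" "Y0 v' = X''"
        using Suc.IH[OF H(1) e(3), of X' X''] Suc.prems e False unfolding X0_def R0_def by auto
      have Y0z: "Y0 z \<subseteq> X0 z" "Y0 z \<noteq> {}" "ODs (Y0 z)" using Y0(1) lz unfolding good_def by auto
      define W where "W = S``Y0 z \<inter> X1 z"
      have W: "rel_between (Y0 z) S W" "W \<noteq> {}" "ODs W" "W \<subseteq> X1 z"
        using rb_fwd[OF H(4) Y0z(1)] Y0z OD_Int OD_Image H(3) Xz unfolding W_def by auto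
      obtain Y1 where Y1: "good ODs n X1 R1 Y1" "Y1 z = W"
        using part1[OF H(2) lz W(4,2,3)] by blast
      have "good ODs (Suc n) X R (\<lambda>u. if last u then Y1 (butlast u) else Y0 (butlast u))"
        by (rule good_comb[OF Y0(1) Y1(1) X0_def X1_def R0_def R1_def]) (use W(1) Y1(2) in \<open>simp add: S_def z_def\<close>)
      then show ?thesis using False Y0(2,3) e by auto
    qed
  next
    assume e: "u0 = replicate n False @ [False]" "v0 = replicate n False @ [True]"
    obtain Y0 where Y0: "good ODs n X0 R0 Y0" "Y0 z = X'"
      using part1[OF H(1) lz, of X'] Suc.prems e unfolding X0_def z_def by auto
    obtain Y1 where Y1: "good ODs n X1 R1 Y1" "Y1 z = X''"
      using part1[OF H(2) lz, of X''] Suc.prems e unfolding X1_def z_def by auto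
    have "good ODs (Suc n) X R (\<lambda>u. if last u then Y1 (butlast u) else Y0 (butlast u))"
      by (rule good_comb[OF Y0(1) Y1(1) X0_def X1_def R0_def R1_def]) (use Suc.prems(9) e Y0(2) Y1(2) in \<open>simp add: S_def z_def\<close>)
    then show ?thesis using Y0(2) Y1(2) e z_def by auto
  qed
qed

end

theorem lemma4p3:
  fixes ODs :: "cantor set \<Rightarrow> bool"
    and ODr :: "(cantor \<times> cantor) set \<Rightarrow> bool"
    and n :: nat
    and X :: "bool list \<Rightarrow> cantor set"
    and R :: "bool list \<Rightarrow> bool list \<Rightarrow> (cantor \<times> cantor) set"
  assumes OD_Int: "\<And>A B. ODs A \<Longrightarrow> ODs B \<Longrightarrow> ODs (A \<inter> B)"
    and OD_Image: "\<And>S A. ODr S \<Longrightarrow> ODs A \<Longrightarrow> ODs (S `` A)"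
    and OD_Image_conv: "\<And>S A. ODr S \<Longrightarrow> ODs A \<Longrightarrow> ODs (S\<inverse> `` A)"
    and X: "\<And>u. length u = n \<Longrightarrow> X u \<noteq> {} \<and> ODs (X u)"
    and R: "\<And>u v. neighbouring n u v \<Longrightarrow> ODr (R u v) \<and> rel_between (X u) (R u v) (X v)"
  shows "(\<forall>u0 X'. length u0 = n \<longrightarrow> X' \<subseteq> X u0 \<longrightarrow> X' \<noteq> {} \<longrightarrow> ODs X' \<longrightarrow>
            (\<exists>Y. (\<forall>u. length u = n \<longrightarrow> Y u \<noteq> {} \<and> ODs (Y u) \<and> Y u \<subseteq> X u) \<and>
                 (\<forall>u v. neighbouring n u v \<longrightarrow> rel_between (Y u) (R u v) (Y v)) \<and>
                 Y u0 = X'))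
       \<and> (\<forall>u0 v0 X' X''. neighbouring n u0 v0 \<longrightarrow>
            X' \<subseteq> X u0 \<longrightarrow> X' \<noteq> {} \<longrightarrow> ODs X' \<longrightarrow>
            X'' \<subseteq> X v0 \<longrightarrow> X'' \<noteq> {} \<longrightarrow> ODs X'' \<longrightarrow>
            rel_between X' (R u0 v0) X'' \<longrightarrow>
            (\<exists>Y. (\<forall>u. length u = n \<longrightarrow> Y u \<noteq> {} \<and> ODs (Y u) \<and> Y u \<subseteq> X u) \<and>
                 (\<forall>u v. neighbouring n u v \<longrightarrow> rel_between (Y u) (R u v) (Y v)) \<and>
                 Y u0 = X' \<and> Y v0 = X''))"
proof -
  interpret odl ODs ODr using OD_Int OD_Image OD_Image_conv by unfold_locales auto
  have h: "hyp ODs ODr n X R" unfolding hyp_def using X R by blast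
  show ?thesis
  proof (intro conjI allI impI)
    fix u0 X' assume a: "length u0 = n" "X' \<subseteq> X u0" "X' \<noteq> {}" "ODs X'"
    from part1[OF h a] obtain Y where "good ODs n X R Y" "Y u0 = X'" by blast
    then show "\<exists>Y. (\<forall>u. length u = n \<longrightarrow> Y u \<noteq> {} \<and> ODs (Y u) \<and> Y u \<subseteq> X u) \<and>
                 (\<forall>u v. neighbouring n u v \<longrightarrow> rel_between (Y u) (R u v) (Y v)) \<and>
                 Y u0 = X'" unfolding good_def by (intro exI[of _ Y]) simp
  next
    fix u0 v0 X' X'' assume a: "neighbouring n u0 v0"
            "X' \<subseteq> X u0" "X' \<noteq> {}" "ODs X'"
            "X'' \<subseteq> X v0" "X'' \<noteq> {}" "ODs X''"
            "rel_between X' (R u0 v0) X''"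
    from part2[OF h a] obtain Y where "good ODs n X R Y" "Y u0 = X'" "Y v0 = X''" by blast
    then show "\<exists>Y. (\<forall>u. length u = n \<longrightarrow> Y u \<noteq> {} \<and> ODs (Y u) \<and> Y u \<subseteq> X u) \<and>
                 (\<forall>u v. neighbouring n u v \<longrightarrow> rel_between (Y u) (R u v) (Y v)) \<and>
                 Y u0 = X' \<and> Y v0 = X''" unfolding good_def by (intro exI[of _ Y]) simp
  qed
qed

end
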